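(* For every $\varepsilon\in(0,1)$ there is a non-flat class A Lorentzian 2-torus $(\mathbb{T}^2,g)$ such that $(1-\varepsilon)\,\mathrm{Vol}(\mathbb{T}^2,g)\le\lambda\le\mathrm{Vol}(\mathbb{T}^2,g)$, where $\lambda$ is the volume of the set of all timelike poles of $(\mathbb{T}^2,g)$.
   Context: A point $p$ of a Lorentzian manifold is a timelike pole if no timelike geodesic starting at $p$ contains a pair of conjugate points. A Lorentzian 2-torus is class A if it is time-orientable, totally vicious (every point lies on a closed timelike curve) and its Abelian cover $(\mathbb{R}^2,g)$ (universal cover with the lifted metric) is globally hyperbolic. Volume is the Riemannian-type volume measure induced by $g$. *)

theory Defs
  imports "HOL-Analysis.Analysis"
begin

text \<open>The torus T^2 is realised as R^2 / Z^2; every object on T^2 is described by its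
 Z^2-periodic lift to the Abelian (= universal) cover R^2 = real \<times> real.\<close>

type_synonym pt = "real \<times> real"
type_synonym metric = "pt \<Rightarrow> nat \<Rightarrow> nat \<Rightarrow> real"

definition comp :: "nat \<Rightarrow> pt \<Rightarrow> real" where
  "comp k v = (if k = 0 then fst v else snd v)"

text \<open>C-infinity smoothness of a real function on R^2 (coinductively: differentiable
 everywhere with smooth partial derivatives).\<close>
coinductive smooth2 :: "(pt \<Rightarrow> real) \<Rightarrow> bool" where
  "\<lbrakk> \<forall>p. (f has_derivative (\<lambda>h. fx p * fst h + fy p * snd h)) (at p);
     smooth2 fx; smooth2 fy \<rbrakk> \<Longrightarrow> smooth2 f"

definition pd :: "nat \<Rightarrow> (pt \<Rightarrow> real) \<Rightarrow> pt \<Rightarrow> real" where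
  "pd k f p = (if k = 0 then deriv (\<lambda>s. f (s, snd p)) (fst p)
                         else deriv (\<lambda>s. f (fst p, s)) (snd p))"

definition Qf :: "metric \<Rightarrow> pt \<Rightarrow> pt \<Rightarrow> real" where
  "Qf g p v = (\<Sum>i<2. \<Sum>j<2. g p i j * comp i v * comp j v)"

definition Bf :: "metric \<Rightarrow> pt \<Rightarrow> pt \<Rightarrow> pt \<Rightarrow> real" where
  "Bf g p v w = (\<Sum>i<2. \<Sum>j<2. g p i j * comp i v * comp j w)"

definition gdet :: "metric \<Rightarrow> pt \<Rightarrow> real" where
  "gdet g p = g p 0 0 * g p 1 1 - g p 0 1 * g p 1 0"

text \<open>Smooth Lorentzian metric on T^2 (lifted to a Z^2-periodic metric on R^2).
 Convention: v is timelike iff Qf g p v < 0.\<close>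
definition torus_lorentz_metric :: "metric \<Rightarrow> bool" where
  "torus_lorentz_metric g \<longleftrightarrow>
     (\<forall>i<2. \<forall>j<2. smooth2 (\<lambda>p. g p i j)) \<and>
     (\<forall>p. g p 0 1 = g p 1 0 \<and> gdet g p < 0) \<and>
     (\<forall>p i j (m::int) (n::int). g (p + (of_int m, of_int n)) i j = g p i j)"

definition ginv :: "metric \<Rightarrow> pt \<Rightarrow> nat \<Rightarrow> nat \<Rightarrow> real" where
  "ginv g p i j =
     (if i = 0 \<and> j = 0 then g p 1 1 / gdet g p
      else if i = 1 \<and> j = 1 then g p 0 0 / gdet g p
      else if i = 0 then - g p 0 1 / gdet g p
      else - g p 1 0 / gdet g p)"

definition chr :: "metric \<Rightarrow> nat \<Rightarrow> nat \<Rightarrow> nat \<Rightarrow> pt \<Rightarrow> real" where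
  "chr g a b c p = (1/2) * (\<Sum>d<2. ginv g p a d *
      (pd b (\<lambda>q. g q d c) p + pd c (\<lambda>q. g q d b) p - pd d (\<lambda>q. g q b c) p))"

definition riem :: "metric \<Rightarrow> nat \<Rightarrow> nat \<Rightarrow> nat \<Rightarrow> nat \<Rightarrow> pt \<Rightarrow> real" where
  "riem g a b c d p = pd c (chr g a d b) p - pd d (chr g a c b) p
      + (\<Sum>e<2. chr g a c e p * chr g e d b p - chr g a d e p * chr g e c b p)"

definition flat :: "metric \<Rightarrow> bool" where
  "flat g \<longleftrightarrow> (\<forall>p a b c d. a < 2 \<longrightarrow> b < 2 \<longrightarrow> c < 2 \<longrightarrow> d < 2 \<longrightarrow> riem g a b c d p = 0)"

definition is_geodesic :: "metric \<Rightarrow> real \<Rightarrow> (real \<Rightarrow> pt) \<Rightarrow> (real \<Rightarrow> pt) \<Rightarrow> bool" where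
  "is_geodesic g T gam v \<longleftrightarrow> (\<exists>acc.
     (\<forall>t\<in>{0..T}. (gam has_vector_derivative v t) (at t within {0..T})) \<and>
     (\<forall>t\<in>{0..T}. (v has_vector_derivative acc t) (at t within {0..T})) \<and>
     (\<forall>t\<in>{0..T}. \<forall>a<2. comp a (acc t) +
         (\<Sum>b<2. \<Sum>c<2. chr g a b c (gam t) * comp b (v t) * comp c (v t)) = 0))"

text \<open>Jacobi field J along the geodesic (gam, v): the Jacobi equation written in
 coordinates (linearised geodesic equation).\<close>
definition is_jacobi :: "metric \<Rightarrow> real \<Rightarrow> (real \<Rightarrow> pt) \<Rightarrow> (real \<Rightarrow> pt) \<Rightarrow> (real \<Rightarrow> pt) \<Rightarrow> bool" where
  "is_jacobi g T gam v J \<longleftrightarrow> (\<exists>W A.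
     (\<forall>t\<in>{0..T}. (J has_vector_derivative W t) (at t within {0..T})) \<and>
     (\<forall>t\<in>{0..T}. (W has_vector_derivative A t) (at t within {0..T})) \<and>
     (\<forall>t\<in>{0..T}. \<forall>a<2. comp a (A t)
        + (\<Sum>b<2. \<Sum>c<2. \<Sum>d<2. pd d (chr g a b c) (gam t) * comp d (J t) * comp b (v t) * comp c (v t))
        + 2 * (\<Sum>b<2. \<Sum>c<2. chr g a b c (gam t) * comp b (v t) * comp c (W t)) = 0))"

definition conjugate_pair :: "metric \<Rightarrow> real \<Rightarrow> (real \<Rightarrow> pt) \<Rightarrow> (real \<Rightarrow> pt) \<Rightarrow> real \<Rightarrow> real \<Rightarrow> bool" where
  "conjugate_pair g T gam v s1 s2 \<longleftrightarrow> 0 \<le> s1 \<and> s1 < s2 \<and> s2 \<le> T \<and>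
     (\<exists>J. is_jacobi g T gam v J \<and> J s1 = 0 \<and> J s2 = 0 \<and> (\<exists>t\<in>{0..T}. J t \<noteq> 0))"

definition timelike_pole :: "metric \<Rightarrow> pt \<Rightarrow> bool" where
  "timelike_pole g p \<longleftrightarrow> \<not> (\<exists>T gam v s1 s2. is_geodesic g T gam v \<and> gam 0 = p \<and>
      Qf g p (v 0) < 0 \<and> conjugate_pair g T gam v s1 s2)"

definition time_orientation :: "metric \<Rightarrow> (pt \<Rightarrow> pt) \<Rightarrow> bool" where
  "time_orientation g X \<longleftrightarrow> continuous_on UNIV X \<and>
     (\<forall>p (m::int) (n::int). X (p + (of_int m, of_int n)) = X p) \<and>
     (\<forall>p. Qf g p (X p) < 0)"

text \<open>Totally vicious: through every point of T^2 passes a closed timelike curve,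
 i.e. in the lift a C^1 timelike curve from p to p + k, k in Z^2.\<close>
definition totally_vicious :: "metric \<Rightarrow> bool" where
  "totally_vicious g \<longleftrightarrow> (\<forall>p. \<exists>gam (m::int) (n::int).
      gam C1_differentiable_on {0..1} \<and>
      (\<forall>t\<in>{0..1}. Qf g (gam t) (vector_derivative gam (at t)) < 0) \<and>
      gam 0 = p \<and> gam 1 = p + (of_int m, of_int n))"

definition fd_causal_curve :: "metric \<Rightarrow> (pt \<Rightarrow> pt) \<Rightarrow> (real \<Rightarrow> pt) \<Rightarrow> bool" where
  "fd_causal_curve g X gam \<longleftrightarrow> continuous_on {0..1} gam \<and>
     (\<exists>S. finite S \<and> gam C1_differentiable_on ({0..1} - S) \<and>
        (\<forall>t\<in>{0..1} - S. vector_derivative gam (at t) \<noteq> 0 \<and>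
            Qf g (gam t) (vector_derivative gam (at t)) \<le> 0 \<and>
            Bf g (gam t) (vector_derivative gam (at t)) (X (gam t)) < 0))"

definition causal_future :: "metric \<Rightarrow> (pt \<Rightarrow> pt) \<Rightarrow> pt \<Rightarrow> pt set" where
  "causal_future g X p = {p} \<union> {q. \<exists>gam. fd_causal_curve g X gam \<and> gam 0 = p \<and> gam 1 = q}"

definition causal_past :: "metric \<Rightarrow> (pt \<Rightarrow> pt) \<Rightarrow> pt \<Rightarrow> pt set" where
  "causal_past g X p = {p} \<union> {q. \<exists>gam. fd_causal_curve g X gam \<and> gam 0 = q \<and> gam 1 = p}"

definition globally_hyperbolic :: "metric \<Rightarrow> (pt \<Rightarrow> pt) \<Rightarrow> bool" where
  "globally_hyperbolic g X \<longleftrightarrow>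
     \<not> (\<exists>gam. fd_causal_curve g X gam \<and> gam 0 = gam 1) \<and>
     (\<forall>p q. compact (causal_future g X p \<inter> causal_past g X q))"

definition class_A :: "metric \<Rightarrow> bool" where
  "class_A g \<longleftrightarrow> (\<exists>X. time_orientation g X \<and> totally_vicious g \<and> globally_hyperbolic g X)"

text \<open>Fundamental domain of the torus and the volume measure of g.\<close>
definition cell :: "pt set" where
  "cell = {0..<1} \<times> {0..<1}"

definition vol :: "metric \<Rightarrow> pt set \<Rightarrow> ennreal" where
  "vol g S = (\<integral>\<^sup>+ x. ennreal (sqrt \<bar>gdet g x\<bar>) * indicator S x \<partial>lebesgue)"

end

theory Submission
  imports Defs
begin


definition Om :: "real \<Rightarrow> real" where "Om x = 2 + sin (2*pi*x)"
definition Om1 :: "real \<Rightarrow> real" where "Om1 x = 2*pi*cos (2*pi*x)"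
definition Om2 :: "real \<Rightarrow> real" where "Om2 x = - (4 * pi ^ 2) * sin (2 * pi * x)"

lemma Om_pos: "Om x > 0"
  unfolding Om_def using sin_ge_minus_one[of "2*pi*x"] by linarith

lemma Om_deriv: "(Om has_real_derivative Om1 x) (at x)"
  unfolding Om_def Om1_def
  by (auto intro!: derivative_eq_intros)

lemma Om1_deriv: "(Om1 has_real_derivative Om2 x) (at x)"
  unfolding Om2_def Om1_def
  by (auto intro!: derivative_eq_intros simp: power2_eq_square)

lemma Om_periodic: "Om (x + of_int m) = Om x"
proof -
  have "sin (2*pi*(x + of_int m)) = sin (2*pi*x + pi * of_int (2*m))" by (simp add: algebra_simps)
  also have "\<dots> = sin (2*pi*x)" by (simp only: sin_add sin_npi_int cos_npi_int) simp
  finally show ?thesis by (simp add: Om_def)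
qed

definition g0 :: metric where
  "g0 p i j = (if i = 0 \<and> j = 0 then - Om (fst p) else if i = 1 \<and> j = 1 then Om (fst p) else 0)"

definition SF :: "(pt \<Rightarrow> real) set" where
  "SF = {f. \<exists>a b c. f = (\<lambda>p. a + b * sin (2*pi*fst p) + c * cos (2*pi*fst p))}"

lemma SF_smooth: "f \<in> SF \<Longrightarrow> smooth2 f"
proof (coinduction arbitrary: f rule: smooth2.coinduct)
  case (smooth2 f)
  then obtain a b c where f: "f = (\<lambda>p. a + b * sin (2*pi*fst p) + c * cos (2*pi*fst p))"
    unfolding SF_def by blast
  define fx where "fx = (\<lambda>p::pt. 0 + (2*pi*b) * cos (2*pi*fst p) + (-(2*pi*c)) * sin (2*pi*fst p))"
  have d: "\<forall>p. (f has_derivative (\<lambda>h. fx p * fst h + (\<lambda>_. 0) p * snd h)) (at p)"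
    unfolding f fx_def
    by (auto intro!: derivative_eq_intros ext simp: algebra_simps)
  have "fx \<in> SF" unfolding SF_def fx_def
    by (rule CollectI, rule exI[of _ 0], rule exI[of _ "-(2*pi*c)"], rule exI[of _ "2*pi*b"]) (auto simp: algebra_simps)
  moreover have "(\<lambda>_::pt. 0::real) \<in> SF" unfolding SF_def
    by (rule CollectI, rule exI[of _ 0], rule exI[of _ 0], rule exI[of _ 0]) auto
  ultimately show ?case using d
    by (intro exI[of _ f] exI[of _ fx] exI[of _ "\<lambda>_. 0"]) auto
qed

lemma g0_smooth: "smooth2 (\<lambda>p. g0 p i j)"
proof -
  have "(\<lambda>p. g0 p i j) \<in> SF"
    unfolding SF_def g0_def Om_def
    apply (rule CollectI)
    apply (cases "i = 0 \<and> j = 0")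
     apply (rule exI[of _ "-2"], rule exI[of _ "-1"], rule exI[of _ 0], force)
    apply (cases "i = 1 \<and> j = 1")
     apply (rule exI[of _ "2"], rule exI[of _ "1"], rule exI[of _ 0], force)
    apply (rule exI[of _ "0"], rule exI[of _ "0"], rule exI[of _ 0], force)
    done
  then show ?thesis by (rule SF_smooth)
qed

lemma sum2: "(\<Sum>i<2. f i) = f 0 + f (1::nat)"
  by (simp add: numeral_2_eq_2)

lemma gdet_g0: "gdet g0 p = - (Om (fst p) * Om (fst p))"
  by (simp add: gdet_def g0_def power2_eq_square)

lemma g0_lorentz: "torus_lorentz_metric g0"
  unfolding torus_lorentz_metric_def
proof (intro conjI allI impI)
  fix i j :: nat show "smooth2 (\<lambda>p. g0 p i j)" by (rule g0_smooth)
next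
  fix p show "g0 p 0 1 = g0 p 1 0" by (simp add: g0_def)
next
  fix p show "gdet g0 p < 0" using Om_pos[of "fst p"] by (simp add: gdet_g0)
next
  fix p :: pt and i j :: nat and m n :: int
  show "g0 (p + (of_int m, of_int n)) i j = g0 p i j"
    by (simp add: g0_def Om_periodic)
qed

definition h :: "real \<Rightarrow> real" where "h x = Om1 x / (2 * Om x)"
definition h1 :: "real \<Rightarrow> real" where "h1 x = (Om2 x * Om x - Om1 x * Om1 x) / (2 * Om x * Om x)"

lemma h_deriv: "(h has_real_derivative h1 x) (at x)"
proof -
  have "((\<lambda>x. Om1 x / (2 * Om x)) has_real_derivative
     (Om2 x * (2 * Om x) - Om1 x * (2 * Om1 x)) / ((2 * Om x) * (2 * Om x))) (at x)"
    using Om_pos[of x]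
    by (auto intro!: derivative_eq_intros Om_deriv Om1_deriv simp: power2_eq_square)
  moreover have "(Om2 x * (2 * Om x) - Om1 x * (2 * Om1 x)) / ((2 * Om x) * (2 * Om x)) = h1 x"
    using Om_pos[of x] unfolding h1_def by (simp add: field_simps)
  ultimately show ?thesis unfolding h_def[abs_def] by simp
qed

lemma deriv_Om: "deriv Om x = Om1 x" by (rule DERIV_imp_deriv[OF Om_deriv])
lemma deriv_mOm: "deriv (\<lambda>s. - Om s) x = - Om1 x"
  by (rule DERIV_imp_deriv) (auto intro!: derivative_eq_intros Om_deriv)
lemma deriv_h: "deriv h x = h1 x" by (rule DERIV_imp_deriv[OF h_deriv])

lemma pd_g0_0: "pd 0 (\<lambda>q. g0 q i j) p =
   (if i = 0 \<and> j = 0 then - Om1 (fst p) else if i = 1 \<and> j = 1 then Om1 (fst p) else 0)"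
  by (auto simp: pd_def g0_def deriv_mOm deriv_Om[unfolded fun_eq_iff] cong: if_cong)

lemma pd_g0_1: "k \<noteq> 0 \<Longrightarrow> pd k (\<lambda>q. g0 q i j) p = 0"
  by (cases "i=0\<and>j=0"; cases "i=1\<and>j=1") (auto simp: pd_def g0_def)

definition Gam :: "nat \<Rightarrow> nat \<Rightarrow> nat \<Rightarrow> bool" where
  "Gam a b c \<longleftrightarrow> (a=0\<and>b=0\<and>c=0) \<or> (a=0\<and>b=1\<and>c=1) \<or> (a=1\<and>b=0\<and>c=1) \<or> (a=1\<and>b=1\<and>c=0)"

lemma ginv_g0: "ginv g0 p i j = (if i = 0 \<and> j = 0 then - 1 / Om (fst p) else if i = 1 \<and> j = 1 then 1 / Om (fst p) else 0)"
  using Om_pos[of "fst p"] by (auto simp: ginv_def gdet_g0 g0_def)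

lemma lt2: "(a::nat) < 2 \<Longrightarrow> a = 0 \<or> a = 1" by auto

lemma chr_g0: assumes "a < 2" "b < 2" "c < 2"
  shows "chr g0 a b c p = (if Gam a b c then h (fst p) else 0)"
proof -
  have O: "Om (fst p) \<noteq> 0" using Om_pos[of "fst p"] by simp
  show ?thesis using lt2[OF assms(1)] lt2[OF assms(2)] lt2[OF assms(3)]
    by (auto simp: chr_def sum2 ginv_g0 pd_g0_0 pd_g0_1 Gam_def h_def field_simps O)
qed

lemma chr_g0_fun: assumes "a < 2" "b < 2" "c < 2"
  shows "chr g0 a b c = (\<lambda>q. if Gam a b c then h (fst q) else 0)"
  using chr_g0[OF assms] by auto

lemma pd_chr_0: assumes "a < 2" "b < 2" "c < 2"
  shows "pd 0 (chr g0 a b c) p = (if Gam a b c then h1 (fst p) else 0)"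
  unfolding chr_g0_fun[OF assms] by (cases "Gam a b c") (auto simp: pd_def deriv_h[unfolded fun_eq_iff])

lemma pd_chr_1: assumes "a < 2" "b < 2" "c < 2" "k \<noteq> 0"
  shows "pd k (chr g0 a b c) p = 0"
  unfolding chr_g0_fun[OF assms(1-3)] using assms(4) by (cases "Gam a b c") (auto simp: pd_def)

lemma riem_g0: "riem g0 0 1 0 1 p = h1 (fst p)"
  by (simp add: riem_def sum2 pd_chr_0 pd_chr_1 chr_g0 Gam_def)

lemma not_flat: "\<not> flat g0"
proof
  assume "flat g0"
  then have "riem g0 0 1 0 1 (0,0) = 0" unfolding flat_def by auto
  then have "h1 0 = 0" by (metis fst_conv riem_g0)
  moreover have "h1 0 = - (pi * pi) / 2"
    by (simp add: h1_def Om_def Om1_def Om2_def)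
  ultimately show False by simp
qed

lemma geod_sum0: "(\<Sum>b<2. \<Sum>c<2. chr g0 0 b c q * comp b u * comp c u) = h (fst q) * (fst u * fst u + snd u * snd u)"
  by (simp add: sum2 chr_g0 Gam_def comp_def algebra_simps)
lemma geod_sum1: "(\<Sum>b<2. \<Sum>c<2. chr g0 1 b c q * comp b u * comp c u) = 2 * h (fst q) * fst u * snd u"
  by (simp add: sum2 chr_g0 Gam_def comp_def algebra_simps)
lemma jac_sumA0: "(\<Sum>b<2. \<Sum>c<2. \<Sum>d<2. pd d (chr g0 0 b c) q * comp d J * comp b u * comp c u)
   = h1 (fst q) * fst J * (fst u * fst u + snd u * snd u)"
  by (simp add: sum2 pd_chr_0 pd_chr_1 Gam_def comp_def algebra_simps)
lemma jac_sumA1: "(\<Sum>b<2. \<Sum>c<2. \<Sum>d<2. pd d (chr g0 1 b c) q * comp d J * comp b u * comp c u)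
   = 2 * h1 (fst q) * fst J * fst u * snd u"
  by (simp add: sum2 pd_chr_0 pd_chr_1 Gam_def comp_def algebra_simps)
lemma jac_sumB0: "(\<Sum>b<2. \<Sum>c<2. chr g0 0 b c q * comp b u * comp c W) = h (fst q) * (fst u * fst W + snd u * snd W)"
  by (simp add: sum2 chr_g0 Gam_def comp_def algebra_simps)
lemma jac_sumB1: "(\<Sum>b<2. \<Sum>c<2. chr g0 1 b c q * comp b u * comp c W) = h (fst q) * (fst u * snd W + snd u * fst W)"
  by (simp add: sum2 chr_g0 Gam_def comp_def algebra_simps)

lemma fst_vd: "(f has_vector_derivative D) F \<Longrightarrow> ((\<lambda>t. fst (f t)) has_real_derivative fst D) F"
proof -
  assume "(f has_vector_derivative D) F"
  then have "(f has_derivative (\<lambda>x. x *\<^sub>R D)) F" by (simp add: has_vector_derivative_def)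
  from has_derivative_fst[OF this] have "((\<lambda>t. fst (f t)) has_derivative (\<lambda>x. x * fst D)) F" by simp
  moreover have "(\<lambda>x. x * fst D) = (*) (fst D)" by (auto simp: fun_eq_iff)
  ultimately show ?thesis by (simp add: has_field_derivative_def)
qed
lemma snd_vd: "(f has_vector_derivative D) F \<Longrightarrow> ((\<lambda>t. snd (f t)) has_real_derivative snd D) F"
proof -
  assume "(f has_vector_derivative D) F"
  then have "(f has_derivative (\<lambda>x. x *\<^sub>R D)) F" by (simp add: has_vector_derivative_def)
  from has_derivative_snd[OF this] have "((\<lambda>t. snd (f t)) has_derivative (\<lambda>x. x * snd D)) F" by simp
  moreover have "(\<lambda>x. x * snd D) = (*) (snd D)" by (auto simp: fun_eq_iff)
  ultimately show ?thesis by (simp add: has_field_derivative_def)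
qed

lemma const_on:
  fixes f :: "real \<Rightarrow> real"
  assumes "\<And>t. t \<in> {0..T} \<Longrightarrow> (f has_real_derivative 0) (at t within {0..T})"
    and "t \<in> {0..T}" "u \<in> {0..T}"
  shows "f t = f u"
proof -
  have "\<exists>c. \<forall>x\<in>{0..T}. f x = c"
  proof (rule has_derivative_zero_constant)
    fix x assume "x \<in> {0..T}"
    have eq: "((*) (0::real)) = (\<lambda>h. 0)" by (rule ext) simp
    from assms(1)[OF \<open>x \<in> {0..T}\<close>] show "(f has_derivative (\<lambda>h. 0)) (at x within {0..T})"
      by (simp add: has_field_derivative_def eq)
  qed simp
  then show ?thesis using assms(2,3) by auto
qed

lemma jacobi_core:
  fixes x v0 v1 a0 a1 j0 j1 w0 w1 A0 A1 :: "real \<Rightarrow> real" and T s1 s2 :: real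
  assumes dx: "\<And>t. t\<in>{0..T} \<Longrightarrow> (x has_real_derivative v0 t) (at t within {0..T})"
    and dv0: "\<And>t. t\<in>{0..T} \<Longrightarrow> (v0 has_real_derivative a0 t) (at t within {0..T})"
    and dv1: "\<And>t. t\<in>{0..T} \<Longrightarrow> (v1 has_real_derivative a1 t) (at t within {0..T})"
    and dj0: "\<And>t. t\<in>{0..T} \<Longrightarrow> (j0 has_real_derivative w0 t) (at t within {0..T})"
    and dj1: "\<And>t. t\<in>{0..T} \<Longrightarrow> (j1 has_real_derivative w1 t) (at t within {0..T})"
    and dw0: "\<And>t. t\<in>{0..T} \<Longrightarrow> (w0 has_real_derivative A0 t) (at t within {0..T})"
    and dw1: "\<And>t. t\<in>{0..T} \<Longrightarrow> (w1 has_real_derivative A1 t) (at t within {0..T})"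
    and ga0: "\<And>t. t\<in>{0..T} \<Longrightarrow> a0 t = - h (x t) * (v0 t * v0 t + v1 t * v1 t)"
    and ga1: "\<And>t. t\<in>{0..T} \<Longrightarrow> a1 t = - 2 * h (x t) * v0 t * v1 t"
    and jA0: "\<And>t. t\<in>{0..T} \<Longrightarrow> A0 t = - h1 (x t) * j0 t * (v0 t * v0 t + v1 t * v1 t)
                  - 2 * h (x t) * (v0 t * w0 t + v1 t * w1 t)"
    and jA1: "\<And>t. t\<in>{0..T} \<Longrightarrow> A1 t = - 2 * h1 (x t) * j0 t * v0 t * v1 t
                  - 2 * h (x t) * (v0 t * w1 t + v1 t * w0 t)"
    and tl: "Om (x 0) * (v1 0 * v1 0 - v0 0 * v0 0) < 0"
    and s: "0 \<le> s1" "s1 < s2" "s2 \<le> T"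
    and z: "j0 s1 = 0" "j1 s1 = 0" "j0 s2 = 0" "j1 s2 = 0"
  shows "\<And>t. t\<in>{0..T} \<Longrightarrow> j0 t = 0 \<and> j1 t = 0"
proof -
  have dOm: "((\<lambda>t. Om (x t)) has_real_derivative Om1 (x t) * v0 t) (at t within {0..T})"
    if "t \<in> {0..T}" for t using DERIV_chain2[OF Om_deriv dx[OF that]] .
  have dOm1: "((\<lambda>t. Om1 (x t)) has_real_derivative Om2 (x t) * v0 t) (at t within {0..T})"
    if "t \<in> {0..T}" for t using DERIV_chain2[OF Om1_deriv dx[OF that]] .
  have hx: "h (x t) = Om1 (x t) / (2 * Om (x t))" for t by (simp add: h_def)
  have h1x: "h1 (x t) = (Om2 (x t) * Om (x t) - Om1 (x t) * Om1 (x t)) / (2 * Om (x t) * Om (x t))" for t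
    by (simp add: h1_def)
  have Opos: "Om (x t) > 0" for t by (rule Om_pos)
  have T0: "0 \<in> {0..T}" using s by auto
  define e where "e t = Om (x t) * (v1 t * v1 t - v0 t * v0 t)" for t
  have de: "(e has_real_derivative 0) (at t within {0..T})" if t: "t \<in> {0..T}" for t
  proof -
    have "(e has_real_derivative (Om1 (x t) * v0 t * (v1 t * v1 t - v0 t * v0 t)
       + Om (x t) * (a1 t * v1 t + v1 t * a1 t - (a0 t * v0 t + v0 t * a0 t)))) (at t within {0..T})"
      unfolding e_def[abs_def]
      by (rule derivative_eq_intros dOm[OF t] dv0[OF t] dv1[OF t] refl)+ (simp add: algebra_simps)
    moreover have "Om1 (x t) * v0 t * (v1 t * v1 t - v0 t * v0 t)
       + Om (x t) * (a1 t * v1 t + v1 t * a1 t - (a0 t * v0 t + v0 t * a0 t)) = 0"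
      using Opos[of t] by (simp add: ga0[OF t] ga1[OF t] hx field_simps)
    ultimately show ?thesis by simp
  qed
  have v0nz: "v0 t \<noteq> 0" if t: "t \<in> {0..T}" for t
  proof
    assume "v0 t = 0"
    then have "e t \<ge> 0" unfolding e_def using Opos[of t] by simp
    moreover have "e t = e 0" by (rule const_on[OF de t T0])
    moreover have "e 0 < 0" using tl by (simp add: e_def)
    ultimately show False by simp
  qed
  have s1T: "s1 \<in> {0..T}" and s2T: "s2 \<in> {0..T}" using s by auto
  \<comment> \<open>tangential component\<close>
  define phi where "phi t = Om (x t) * (j1 t * v1 t - j0 t * v0 t)" for t
  define chi where "chi t = 2 * Om (x t) * (v1 t * w1 t - v0 t * w0 t)
      + Om1 (x t) * j0 t * (v1 t * v1 t - v0 t * v0 t)" for t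
  have dphi: "(phi has_real_derivative chi t / 2) (at t within {0..T})" if t: "t \<in> {0..T}" for t
  proof -
    have "(phi has_real_derivative (Om1 (x t) * v0 t * (j1 t * v1 t - j0 t * v0 t)
       + Om (x t) * (w1 t * v1 t + j1 t * a1 t - (w0 t * v0 t + j0 t * a0 t)))) (at t within {0..T})"
      unfolding phi_def[abs_def]
      by (rule derivative_eq_intros dOm[OF t] dv0[OF t] dv1[OF t] dj0[OF t] dj1[OF t] refl)+
        (simp add: algebra_simps)
    moreover have "Om1 (x t) * v0 t * (j1 t * v1 t - j0 t * v0 t)
       + Om (x t) * (w1 t * v1 t + j1 t * a1 t - (w0 t * v0 t + j0 t * a0 t)) = chi t / 2"
      using Opos[of t] by (simp add: chi_def ga0[OF t] ga1[OF t] hx field_simps)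
    ultimately show ?thesis by simp
  qed
  have dchi: "(chi has_real_derivative 0) (at t within {0..T})" if t: "t \<in> {0..T}" for t
  proof -
    have "(chi has_real_derivative (2 * (Om1 (x t) * v0 t) * (v1 t * w1 t - v0 t * w0 t)
       + 2 * Om (x t) * (a1 t * w1 t + v1 t * A1 t - (a0 t * w0 t + v0 t * A0 t))
       + Om2 (x t) * v0 t * j0 t * (v1 t * v1 t - v0 t * v0 t)
       + Om1 (x t) * w0 t * (v1 t * v1 t - v0 t * v0 t)
       + Om1 (x t) * j0 t * (2 * v1 t * a1 t - 2 * v0 t * a0 t))) (at t within {0..T})"
      unfolding chi_def[abs_def]
      by (rule derivative_eq_intros dOm[OF t] dOm1[OF t] dv0[OF t] dv1[OF t] dj0[OF t] dj1[OF t]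
            dw0[OF t] dw1[OF t] refl)+
        (simp add: algebra_simps)
    moreover have "2 * (Om1 (x t) * v0 t) * (v1 t * w1 t - v0 t * w0 t)
       + 2 * Om (x t) * (a1 t * w1 t + v1 t * A1 t - (a0 t * w0 t + v0 t * A0 t))
       + Om2 (x t) * v0 t * j0 t * (v1 t * v1 t - v0 t * v0 t)
       + Om1 (x t) * w0 t * (v1 t * v1 t - v0 t * v0 t)
       + Om1 (x t) * j0 t * (2 * v1 t * a1 t - 2 * v0 t * a0 t) = 0"
      using Opos[of t] by (simp add: ga0[OF t] ga1[OF t] jA0[OF t] jA1[OF t] hx h1x field_simps)
    ultimately show ?thesis by simp
  qed
  have chic: "chi t = chi 0" if "t \<in> {0..T}" for t by (rule const_on[OF dchi that T0])
  define phi2 where "phi2 t = phi t - chi 0 / 2 * t" for t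
  have dphi2: "(phi2 has_real_derivative 0) (at t within {0..T})" if t: "t \<in> {0..T}" for t
  proof -
    have "(phi2 has_real_derivative (chi t / 2 - chi 0 / 2 * 1)) (at t within {0..T})"
      unfolding phi2_def[abs_def]
      by (rule derivative_eq_intros dphi[OF t] refl)+ simp
    then show ?thesis using chic[OF t] by simp
  qed
  have "phi2 s1 = phi2 s2" by (rule const_on[OF dphi2 s1T s2T])
  moreover have "phi s1 = 0" "phi s2 = 0" using z by (auto simp: phi_def)
  ultimately have "chi 0 / 2 * (s2 - s1) = 0" by (auto simp: phi2_def algebra_simps)
  then have chi0: "chi 0 = 0" using s by simp
  have phi0: "phi t = 0" if t: "t \<in> {0..T}" for t
  proof -
    have "phi2 t = phi2 s1" by (rule const_on[OF dphi2 t s1T])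
    then show ?thesis using \<open>phi s1 = 0\<close> chi0 by (simp add: phi2_def)
  qed
  have rel: "j0 t * v0 t = j1 t * v1 t" if t: "t \<in> {0..T}" for t
    using phi0[OF t] Opos[of t] by (simp add: phi_def)
  \<comment> \<open>Wronskian with the Killing field\<close>
  define psi where "psi t = Om (x t) * w1 t + Om1 (x t) * v1 t * j0 t" for t
  have dpsi: "(psi has_real_derivative 0) (at t within {0..T})" if t: "t \<in> {0..T}" for t
  proof -
    have "(psi has_real_derivative (Om1 (x t) * v0 t * w1 t + Om (x t) * A1 t
        + Om2 (x t) * v0 t * v1 t * j0 t + Om1 (x t) * a1 t * j0 t + Om1 (x t) * v1 t * w0 t))
        (at t within {0..T})"
      unfolding psi_def[abs_def]
      by (rule derivative_eq_intros dOm[OF t] dOm1[OF t] dv0[OF t] dv1[OF t] dj0[OF t] dj1[OF t]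
            dw0[OF t] dw1[OF t] refl)+
        (simp add: algebra_simps)
    moreover have "Om1 (x t) * v0 t * w1 t + Om (x t) * A1 t
        + Om2 (x t) * v0 t * v1 t * j0 t + Om1 (x t) * a1 t * j0 t + Om1 (x t) * v1 t * w0 t = 0"
      using Opos[of t] by (simp add: ga0[OF t] ga1[OF t] jA0[OF t] jA1[OF t] hx h1x field_simps)
    ultimately show ?thesis by simp
  qed
  have psic: "psi t = psi 0" if "t \<in> {0..T}" for t by (rule const_on[OF dpsi that T0])
  define rho where "rho t = j1 t / (Om (x t) * (v0 t * v0 t))" for t
  have drho: "(rho has_real_derivative psi 0 / (Om (x t) * v0 t)^2) (at t within {0..T})"
    if t: "t \<in> {0..T}" for t
  proof -
    have nz: "Om (x t) * (v0 t * v0 t) \<noteq> 0" using Opos[of t] v0nz[OF t] by simp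
    have D1: "(rho has_real_derivative (w1 t * (Om (x t) * (v0 t * v0 t)) - j1 t * (Om1 (x t) * v0 t * (v0 t * v0 t)
          + Om (x t) * (a0 t * v0 t + v0 t * a0 t))) / (Om (x t) * (v0 t * v0 t) * (Om (x t) * (v0 t * v0 t))))
        (at t within {0..T})"
      unfolding rho_def[abs_def]
      by (rule derivative_eq_intros dOm[OF t] dv0[OF t] dj1[OF t] refl nz)+
        (simp add: algebra_simps)
    have j0eq: "j0 t = j1 t * v1 t / v0 t" using rel[OF t] v0nz[OF t] by (simp add: field_simps)
    moreover have "(w1 t * (Om (x t) * (v0 t * v0 t)) - j1 t * (Om1 (x t) * v0 t * (v0 t * v0 t)
          + Om (x t) * (a0 t * v0 t + v0 t * a0 t))) / (Om (x t) * (v0 t * v0 t) * (Om (x t) * (v0 t * v0 t)))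
        = psi t / (Om (x t) * v0 t)^2"
      unfolding psi_def j0eq using Opos[of t] v0nz[OF t]
      by (simp add: ga0[OF t] hx field_simps power2_eq_square)
    ultimately have "(rho has_real_derivative psi t / (Om (x t) * v0 t)^2) (at t within {0..T})"
      using D1 by simp
    then show ?thesis using psic[OF t] by simp
  qed
  have contrho: "continuous_on {s1..s2} rho"
  proof -
    have "continuous_on {0..T} rho" by (rule DERIV_continuous_on[OF drho])
    then show ?thesis by (rule continuous_on_subset) (use s in auto)
  qed
  have "rho s1 = 0" "rho s2 = 0" using z by (auto simp: rho_def)
  have "\<exists>zz. s1 < zz \<and> zz < s2 \<and> (\<lambda>y hh. psi 0 / (Om (x y) * v0 y)^2 * hh) zz = (\<lambda>v. 0)"
  proof (rule Rolle_deriv[OF s(2) _ contrho])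
    show "rho s1 = rho s2" using \<open>rho s1 = 0\<close> \<open>rho s2 = 0\<close> by simp
    fix y assume y: "s1 < y" "y < s2"
    then have yT: "y \<in> {0..T}" and yi: "y \<in> interior {0..T}" using s by auto
    have "(rho has_real_derivative psi 0 / (Om (x y) * v0 y)^2) (at y)"
      using drho[OF yT] at_within_interior[OF yi] by simp
    moreover have "(\<lambda>hh. psi 0 / (Om (x y) * v0 y)^2 * hh) = (*) (psi 0 / (Om (x y) * v0 y)^2)"
      by (rule ext) simp
    ultimately show "(rho has_derivative (\<lambda>y hh. psi 0 / (Om (x y) * v0 y)^2 * hh) y) (at y)"
      by (simp only: has_field_derivative_def)
  qed
  then obtain zz where zz: "s1 < zz" "zz < s2"
    and fz: "(\<lambda>hh. psi 0 / (Om (x zz) * v0 zz)^2 * hh) = (\<lambda>v. 0)" by auto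
  have zT: "zz \<in> {0..T}" using zz s by auto
  from fun_cong[OF fz, of 1] have "psi 0 / (Om (x zz) * v0 zz)^2 = 0" by simp
  then have psi0: "psi 0 = 0" using Opos[of zz] v0nz[OF zT] by simp
  have drho0: "(rho has_real_derivative 0) (at t within {0..T})" if "t \<in> {0..T}" for t
    using drho[OF that] psi0 by simp
  show "j0 t = 0 \<and> j1 t = 0" if t: "t \<in> {0..T}" for t
  proof -
    have "rho t = rho s1" by (rule const_on[OF drho0 t s1T])
    then have "rho t = 0" using \<open>rho s1 = 0\<close> by simp
    then have j1t: "j1 t = 0" using Opos[of t] v0nz[OF t] by (simp add: rho_def)
    then have "j0 t * v0 t = 0" using rel[OF t] by simp
    then show ?thesis using j1t v0nz[OF t] by simp
  qed

qed


lemma Qf_g0: "Qf g0 p u = Om (fst p) * (snd u * snd u - fst u * fst u)"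
  by (simp add: Qf_def sum2 g0_def comp_def algebra_simps)

lemma Bf_g0: "Bf g0 p u w = Om (fst p) * (snd u * snd w - fst u * fst w)"
  by (simp add: Bf_def sum2 g0_def comp_def algebra_simps)

lemma all_poles: "timelike_pole g0 p"
  unfolding timelike_pole_def
proof (intro notI, elim exE conjE)
  fix T gam v s1 s2
  assume geo: "is_geodesic g0 T gam v" and p: "gam 0 = p" and q: "Qf g0 p (v 0) < 0"
    and cp: "conjugate_pair g0 T gam v s1 s2"
  from geo obtain acc where
    dg: "\<forall>t\<in>{0..T}. (gam has_vector_derivative v t) (at t within {0..T})" and
    dv: "\<forall>t\<in>{0..T}. (v has_vector_derivative acc t) (at t within {0..T})" and
    ge: "\<forall>t\<in>{0..T}. \<forall>a<2. comp a (acc t) +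
         (\<Sum>b<2. \<Sum>c<2. chr g0 a b c (gam t) * comp b (v t) * comp c (v t)) = 0"
    unfolding is_geodesic_def by blast
  from cp have s: "0 \<le> s1" "s1 < s2" "s2 \<le> T" and
    "\<exists>J. is_jacobi g0 T gam v J \<and> J s1 = 0 \<and> J s2 = 0 \<and> (\<exists>t\<in>{0..T}. J t \<noteq> 0)"
    unfolding conjugate_pair_def by auto
  then obtain J t0 where jac: "is_jacobi g0 T gam v J" and J0: "J s1 = 0" "J s2 = 0"
    and t0: "t0 \<in> {0..T}" "J t0 \<noteq> 0" by blast
  from jac obtain W A where
    dJ: "\<forall>t\<in>{0..T}. (J has_vector_derivative W t) (at t within {0..T})" and
    dW: "\<forall>t\<in>{0..T}. (W has_vector_derivative A t) (at t within {0..T})" and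
    je: "\<forall>t\<in>{0..T}. \<forall>a<2. comp a (A t)
        + (\<Sum>b<2. \<Sum>c<2. \<Sum>d<2. pd d (chr g0 a b c) (gam t) * comp d (J t) * comp b (v t) * comp c (v t))
        + 2 * (\<Sum>b<2. \<Sum>c<2. chr g0 a b c (gam t) * comp b (v t) * comp c (W t)) = 0"
    unfolding is_jacobi_def by blast
  have ge0: "fst (acc t) = - h (fst (gam t)) * (fst (v t) * fst (v t) + snd (v t) * snd (v t))"
    if "t \<in> {0..T}" for t
    using ge[rule_format, OF that, of 0] unfolding geod_sum0 by (simp add: comp_def algebra_simps)
  have ge1: "snd (acc t) = - 2 * h (fst (gam t)) * fst (v t) * snd (v t)"
    if "t \<in> {0..T}" for t
    using ge[rule_format, OF that, of 1] unfolding geod_sum1 by (simp add: comp_def algebra_simps)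
  have je0: "fst (A t) = - h1 (fst (gam t)) * fst (J t) * (fst (v t) * fst (v t) + snd (v t) * snd (v t))
      - 2 * h (fst (gam t)) * (fst (v t) * fst (W t) + snd (v t) * snd (W t))"
    if "t \<in> {0..T}" for t
    using je[rule_format, OF that, of 0] unfolding jac_sumA0 jac_sumB0 by (simp add: comp_def algebra_simps)
  have je1: "snd (A t) = - 2 * h1 (fst (gam t)) * fst (J t) * fst (v t) * snd (v t)
      - 2 * h (fst (gam t)) * (fst (v t) * snd (W t) + snd (v t) * fst (W t))"
    if "t \<in> {0..T}" for t
    using je[rule_format, OF that, of 1] unfolding jac_sumA1 jac_sumB1 by (simp add: comp_def algebra_simps)
  have tl: "Om (fst (gam 0)) * (snd (v 0) * snd (v 0) - fst (v 0) * fst (v 0)) < 0"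
    using q p by (simp add: Qf_g0)
  have res: "\<And>t. t\<in>{0..T} \<Longrightarrow> fst (J t) = 0 \<and> snd (J t) = 0"
    by (rule jacobi_core[
        OF fst_vd[OF dg[rule_format]] fst_vd[OF dv[rule_format]] snd_vd[OF dv[rule_format]]
        fst_vd[OF dJ[rule_format]] snd_vd[OF dJ[rule_format]] fst_vd[OF dW[rule_format]] snd_vd[OF dW[rule_format]]
        ge0 ge1 je0 je1 tl s])
      (use J0 in auto)
  from res[OF t0(1)] t0(2) show False by (simp add: prod_eq_iff)
qed




lemma mono_fin_aux:
  fixes f f' :: "real \<Rightarrow> real"
  assumes fin: "finite S"
    and der: "\<And>t. t \<in> {a..b} - S \<Longrightarrow> (f has_real_derivative f' t) (at t) \<and> f' t \<ge> 0"
    and cont: "continuous_on {a..b} f" and ab: "a \<le> b"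
  shows "f a \<le> f b"
  using der cont ab
proof (induction "card (S \<inter> {a<..<b})" arbitrary: a b rule: less_induct)
  case (less a b)
  show ?case
  proof (cases "S \<inter> {a<..<b} = {}")
    case True
    show ?thesis
    proof (rule DERIV_nonneg_imp_increasing_open[OF less.prems(3) _ less.prems(2)])
      fix x assume "a < x" "x < b"
      then have "x \<in> {a..b} - S" using True by auto
      then show "\<exists>y. DERIV f x :> y \<and> y \<ge> 0" using less.prems(1) by blast
    qed
  next
    case False
    then obtain s where s: "s \<in> S" "a < s" "s < b" by auto
    have fin1: "finite (S \<inter> {a<..<b})" using fin by simp
    have c1: "card (S \<inter> {a<..<s}) < card (S \<inter> {a<..<b})"
      by (rule psubset_card_mono[OF fin1]) (use s in auto)
    have c2: "card (S \<inter> {s<..<b}) < card (S \<inter> {a<..<b})"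
      by (rule psubset_card_mono[OF fin1]) (use s in auto)
    have "f a \<le> f s"
      by (rule less.hyps[OF c1]) (use less.prems s in \<open>auto intro: continuous_on_subset\<close>)
    moreover have "f s \<le> f b"
      by (rule less.hyps[OF c2]) (use less.prems s in \<open>auto intro: continuous_on_subset\<close>)
    ultimately show ?thesis by simp
  qed
qed


definition X0 :: "pt \<Rightarrow> pt" where "X0 p = (1, 0)"

lemma causal_props:
  assumes "fd_causal_curve g0 X0 gam"
  shows "\<exists>S. finite S \<and> continuous_on {0..1} gam \<and>
    (\<forall>t\<in>{0..1} - S. \<exists>d. (gam has_vector_derivative d) (at t) \<and> \<bar>snd d\<bar> \<le> fst d \<and> fst d > 0)"
proof -
  from assms obtain S where S: "finite S" "continuous_on {0..1} gam" "gam C1_differentiable_on ({0..1} - S)"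
    "\<forall>t\<in>{0..1} - S. vector_derivative gam (at t) \<noteq> 0 \<and>
            Qf g0 (gam t) (vector_derivative gam (at t)) \<le> 0 \<and>
            Bf g0 (gam t) (vector_derivative gam (at t)) (X0 (gam t)) < 0"
    unfolding fd_causal_curve_def by blast
  from S(3) obtain D where D: "\<forall>x\<in>{0..1} - S. (gam has_vector_derivative D x) (at x)"
    unfolding C1_differentiable_on_def by blast
  have "\<exists>d. (gam has_vector_derivative d) (at t) \<and> \<bar>snd d\<bar> \<le> fst d \<and> fst d > 0"
    if t: "t \<in> {0..1} - S" for t
  proof -
    have vd: "vector_derivative gam (at t) = D t" using D t by (simp add: vector_derivative_at)
    have O: "Om (fst (gam t)) > 0" by (rule Om_pos)
    from S(4)[rule_format, OF t] have q: "Om (fst (gam t)) * (snd (D t) * snd (D t) - fst (D t) * fst (D t)) \<le> 0"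
      and b: "Om (fst (gam t)) * (snd (D t) * 0 - fst (D t) * 1) < 0"
      unfolding vd by (auto simp: Qf_g0 Bf_g0 X0_def)
    have f: "fst (D t) > 0" using b O by (simp add: zero_less_mult_iff)
    have "snd (D t) * snd (D t) \<le> fst (D t) * fst (D t)" using q O by (simp add: mult_le_0_iff)
    then have "\<bar>snd (D t)\<bar> \<le> \<bar>fst (D t)\<bar>" by (simp add: abs_le_square_iff power2_eq_square)
    then show ?thesis
      using f D t by (intro exI[of _ "D t"]) auto
  qed
  then show ?thesis using S(1,2) by blast
qed

lemma causal_mono:
  assumes "fd_causal_curve g0 X0 gam" "0 \<le> a" "a \<le> b" "b \<le> 1"
  shows "\<bar>snd (gam b) - snd (gam a)\<bar> \<le> fst (gam b) - fst (gam a)" "fst (gam a) \<le> fst (gam b)"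
proof -
  obtain S where S: "finite S" "continuous_on {0..1} gam"
    "\<forall>t\<in>{0..1} - S. \<exists>d. (gam has_vector_derivative d) (at t) \<and> \<bar>snd d\<bar> \<le> fst d \<and> fst d > 0"
    using causal_props[OF assms(1)] by blast
  have sub: "{a..b} \<subseteq> {0..1}" using assms by auto
  have cg: "continuous_on {a..b} gam" using S(2) sub by (rule continuous_on_subset)
  have cfst: "continuous_on {a..b} (\<lambda>t. fst (gam t))" and csnd: "continuous_on {a..b} (\<lambda>t. snd (gam t))"
    using cg by (auto intro: continuous_on_fst continuous_on_snd)
  have key: "\<And>c0 c1. \<forall>d. \<bar>snd d\<bar> \<le> fst d \<longrightarrow> c0 * fst d + c1 * snd d \<ge> 0 \<Longrightarrow>
      c0 * fst (gam a) + c1 * snd (gam a) \<le> c0 * fst (gam b) + c1 * snd (gam b)"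
  proof -
    fix c0 c1 :: real assume c: "\<forall>d. \<bar>snd d\<bar> \<le> fst d \<longrightarrow> c0 * fst d + c1 * snd d \<ge> 0"
    obtain dd where dd: "\<And>t. t \<in> {0..1} - S \<Longrightarrow> (gam has_vector_derivative dd t) (at t) \<and> \<bar>snd (dd t)\<bar> \<le> fst (dd t) \<and> fst (dd t) > 0"
    proof -
      have "\<forall>t. \<exists>d. t \<in> {0..1} - S \<longrightarrow> (gam has_vector_derivative d) (at t) \<and> \<bar>snd d\<bar> \<le> fst d \<and> fst d > 0"
        using S(3) by blast
      then have "\<exists>dd. \<forall>t. t \<in> {0..1} - S \<longrightarrow> (gam has_vector_derivative dd t) (at t) \<and> \<bar>snd (dd t)\<bar> \<le> fst (dd t) \<and> fst (dd t) > 0"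
        by (rule choice)
      then show ?thesis using that by blast
    qed
    show "c0 * fst (gam a) + c1 * snd (gam a) \<le> c0 * fst (gam b) + c1 * snd (gam b)"
    proof (rule mono_fin_aux[OF S(1), where f' = "\<lambda>t. c0 * fst (dd t) + c1 * snd (dd t)"
        and f = "\<lambda>t. c0 * fst (gam t) + c1 * snd (gam t)"])
      fix t assume t: "t \<in> {a..b} - S"
      then have t': "t \<in> {0..1} - S" using sub by auto
      have ddt: "(gam has_vector_derivative dd t) (at t)" "\<bar>snd (dd t)\<bar> \<le> fst (dd t)"
        using dd[OF t'] by auto
      have "((\<lambda>t. c0 * fst (gam t) + c1 * snd (gam t)) has_real_derivative c0 * fst (dd t) + c1 * snd (dd t)) (at t)"
        by (intro DERIV_add DERIV_cmult fst_vd[OF ddt(1)] snd_vd[OF ddt(1)])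
      moreover have "0 \<le> c0 * fst (dd t) + c1 * snd (dd t)" using c ddt(2) by blast
      ultimately show "((\<lambda>t. c0 * fst (gam t) + c1 * snd (gam t)) has_real_derivative c0 * fst (dd t) + c1 * snd (dd t)) (at t) \<and>
          0 \<le> c0 * fst (dd t) + c1 * snd (dd t)" by blast
    next
      show "continuous_on {a..b} (\<lambda>t. c0 * fst (gam t) + c1 * snd (gam t))"
        by (intro continuous_on_add continuous_on_mult_left cfst csnd)
    qed (use assms in auto)
  qed
  have k1: "1 * fst (gam a) + 1 * snd (gam a) \<le> 1 * fst (gam b) + 1 * snd (gam b)"
    by (rule key) (simp add: abs_le_iff)
  have k2: "1 * fst (gam a) + (-1) * snd (gam a) \<le> 1 * fst (gam b) + (-1) * snd (gam b)"
    by (rule key) (simp add: abs_le_iff)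
  show "\<bar>snd (gam b) - snd (gam a)\<bar> \<le> fst (gam b) - fst (gam a)" using k1 k2 by simp
  then show "fst (gam a) \<le> fst (gam b)" by simp
qed

lemma causal_strict:
  assumes "fd_causal_curve g0 X0 gam"
  shows "fst (gam 0) < fst (gam 1)"
proof (rule ccontr)
  assume "\<not> ?thesis"
  then have n: "fst (gam 1) \<le> fst (gam 0)" by simp
  have c: "fst (gam t) = fst (gam 0)" if "t \<in> {0..1}" for t
  proof -
    have "fst (gam 0) \<le> fst (gam t)" by (rule causal_mono(2)[OF assms]) (use that in auto)
    moreover have "fst (gam t) \<le> fst (gam 1)" by (rule causal_mono(2)[OF assms]) (use that in auto)
    ultimately show ?thesis using n by linarith
  qed
  obtain S where S: "finite S" "continuous_on {0..1} gam"
    "\<forall>t\<in>{0..1} - S. \<exists>d. (gam has_vector_derivative d) (at t) \<and> \<bar>snd d\<bar> \<le> fst d \<and> fst d > 0"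
    using causal_props[OF assms] by blast
  have "infinite ({0<..<(1::real)} - S)" using S(1) by (intro Diff_infinite_finite) simp_all
  then have "{0<..<(1::real)} - S \<noteq> {}" by (rule infinite_imp_nonempty)
  then obtain t where t: "t \<in> {0<..<(1::real)} - S" by blast
  then have t: "t \<in> {0<..<(1::real)}" "t \<notin> S" by auto
  have tt: "t \<in> {0..1} - S" using t by auto
  from S(3)[rule_format, OF tt] obtain d where d: "(gam has_vector_derivative d) (at t)" "fst d > 0" by blast
  have dfst: "((\<lambda>t. fst (gam t)) has_real_derivative fst d) (at t)" by (rule fst_vd[OF d(1)])
  have lc:  "\<forall>y. \<bar>t - y\<bar> < min t (1 - t) \<longrightarrow> fst (gam t) = fst (gam y)"
  proof (intro allI impI)
    fix y assume "\<bar>t - y\<bar> < min t (1 - t)"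
    then have "y \<in> {0..1}" "t \<in> {0..1}" using t by (auto simp: abs_less_iff)
    then show "fst (gam t) = fst (gam y)" using c[of t] c[of y] by simp
  qed
  have "fst d = 0" by (rule DERIV_local_const[OF dfst _ lc]) (use t in auto)
  with d show False by simp
qed




lemma line_vd: "((\<lambda>t. p + t *\<^sub>R (d::pt)) has_vector_derivative d) (at t)"
  by (auto intro!: derivative_eq_intros)

lemma line_C1: "(\<lambda>t. p + t *\<^sub>R (d::pt)) C1_differentiable_on S"
  unfolding C1_differentiable_on_def
  by (rule exI[of _ "\<lambda>_. d"]) (auto intro: line_vd)

lemma line_vdv: "vector_derivative (\<lambda>t. p + t *\<^sub>R (d::pt)) (at t) = d"
  by (rule vector_derivative_at[OF line_vd])

lemma line_causal:
  assumes c: "\<bar>snd q - snd p\<bar> \<le> fst q - fst p" and ne: "q \<noteq> p"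
  shows "fd_causal_curve g0 X0 (\<lambda>t. p + t *\<^sub>R (q - p))"
proof -
  have f: "fst q - fst p > 0"
  proof (rule ccontr)
    assume "\<not> ?thesis"
    then have "fst q = fst p" "snd q = snd p" using c by auto
    then show False using ne by (simp add: prod_eq_iff)
  qed
  have sq: "(snd q - snd p) * (snd q - snd p) \<le> (fst q - fst p) * (fst q - fst p)"
    using c f by (metis abs_le_square_iff abs_of_pos power2_eq_square)
  show ?thesis
    unfolding fd_causal_curve_def
  proof (intro conjI exI[of _ "{}"])
    show "continuous_on {0..1} (\<lambda>t. p + t *\<^sub>R (q - p))" by (intro continuous_intros)
    show "(\<lambda>t. p + t *\<^sub>R (q - p)) C1_differentiable_on {0..1} - {}" by (rule line_C1)
    show "finite ({}::real set)" by simp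
    show "\<forall>t\<in>{0..1} - {}.
       vector_derivative (\<lambda>t. p + t *\<^sub>R (q - p)) (at t) \<noteq> 0 \<and>
       Qf g0 (p + t *\<^sub>R (q - p)) (vector_derivative (\<lambda>t. p + t *\<^sub>R (q - p)) (at t)) \<le> 0 \<and>
       Bf g0 (p + t *\<^sub>R (q - p)) (vector_derivative (\<lambda>t. p + t *\<^sub>R (q - p)) (at t))
        (X0 (p + t *\<^sub>R (q - p))) < 0"
    proof
      fix t :: real
      have O: "Om (fst (p + t *\<^sub>R (q - p))) > 0" by (rule Om_pos)
      show "vector_derivative (\<lambda>t. p + t *\<^sub>R (q - p)) (at t) \<noteq> 0 \<and>
       Qf g0 (p + t *\<^sub>R (q - p)) (vector_derivative (\<lambda>t. p + t *\<^sub>R (q - p)) (at t)) \<le> 0 \<and>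
       Bf g0 (p + t *\<^sub>R (q - p)) (vector_derivative (\<lambda>t. p + t *\<^sub>R (q - p)) (at t))
        (X0 (p + t *\<^sub>R (q - p))) < 0"
        unfolding line_vdv Qf_g0 Bf_g0 X0_def
        using ne O f sq by (auto simp: mult_le_0_iff mult_less_0_iff)
    qed
  qed
qed

lemma future_eq: "causal_future g0 X0 p = {q. \<bar>snd q - snd p\<bar> \<le> fst q - fst p}"
proof (intro set_eqI iffI)
  fix q assume "q \<in> causal_future g0 X0 p"
  then consider "q = p" | gam where "fd_causal_curve g0 X0 gam" "gam 0 = p" "gam 1 = q"
    unfolding causal_future_def by blast
  then show "q \<in> {q. \<bar>snd q - snd p\<bar> \<le> fst q - fst p}"
  proof cases
    case 1 then show ?thesis by simp
  next
    case 2 then show ?thesis using causal_mono(1)[OF 2(1), of 0 1] by simp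
  qed
next
  fix q assume q: "q \<in> {q. \<bar>snd q - snd p\<bar> \<le> fst q - fst p}"
  show "q \<in> causal_future g0 X0 p"
  proof (cases "q = p")
    case True then show ?thesis by (simp add: causal_future_def)
  next
    case False
    have "fd_causal_curve g0 X0 (\<lambda>t. p + t *\<^sub>R (q - p))" using line_causal q False by simp
    then show ?thesis unfolding causal_future_def
      by (intro UnI2 CollectI exI[of _ "\<lambda>t. p + t *\<^sub>R (q - p)"]) simp
  qed
qed

lemma past_eq: "causal_past g0 X0 q = {p. \<bar>snd q - snd p\<bar> \<le> fst q - fst p}"
proof (intro set_eqI iffI)
  fix p assume "p \<in> causal_past g0 X0 q"
  then consider "q = p" | gam where "fd_causal_curve g0 X0 gam" "gam 0 = p" "gam 1 = q"
    unfolding causal_past_def by blast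
  then show "p \<in> {p. \<bar>snd q - snd p\<bar> \<le> fst q - fst p}"
  proof cases
    case 1 then show ?thesis by simp
  next
    case 2 then show ?thesis using causal_mono(1)[OF 2(1), of 0 1] by simp
  qed
next
  fix p assume p: "p \<in> {p. \<bar>snd q - snd p\<bar> \<le> fst q - fst p}"
  show "p \<in> causal_past g0 X0 q"
  proof (cases "q = p")
    case True then show ?thesis by (simp add: causal_past_def)
  next
    case False
    have "fd_causal_curve g0 X0 (\<lambda>t. p + t *\<^sub>R (q - p))" using line_causal p False by simp
    then show ?thesis unfolding causal_past_def
      by (intro UnI2 CollectI exI[of _ "\<lambda>t. p + t *\<^sub>R (q - p)"]) simp
  qed
qed

lemma diamond_compact: "compact (causal_future g0 X0 p \<inter> causal_past g0 X0 q)"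
proof -
  let ?D = "{r. \<bar>snd r - snd p\<bar> \<le> fst r - fst p} \<inter> {r::pt. \<bar>snd q - snd r\<bar> \<le> fst q - fst r}"
  have cl: "closed ?D"
    by (intro closed_Int closed_Collect_le continuous_intros)
  define L where "L = fst q - fst p"
  have "?D \<subseteq> cbox (fst p, snd p - L) (fst q, snd p + L)"
  proof
    fix r :: pt assume r: "r \<in> ?D"
    obtain a b where ab: "r = (a, b)" by (cases r)
    show "r \<in> cbox (fst p, snd p - L) (fst q, snd p + L)"
      using r unfolding ab L_def by (auto simp: abs_le_iff)
  qed
  then have "bounded ?D" by (rule bounded_subset[OF bounded_cbox])
  then show ?thesis using cl by (simp add: compact_eq_bounded_closed future_eq past_eq)
qed

lemma class_A_g0: "class_A g0"
  unfolding class_A_def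
proof (intro exI[of _ X0] conjI)
  show "time_orientation g0 X0"
    unfolding time_orientation_def X0_def
    using Om_pos by (auto simp: Qf_g0)
  show "totally_vicious g0"
    unfolding totally_vicious_def
  proof
    fix p :: pt
    show "\<exists>gam (m::int) (n::int). gam C1_differentiable_on {0..1} \<and>
      (\<forall>t\<in>{0..1}. Qf g0 (gam t) (vector_derivative gam (at t)) < 0) \<and>
      gam 0 = p \<and> gam 1 = p + (of_int m, of_int n)"
      apply (rule exI[of _ "\<lambda>t. p + t *\<^sub>R (1, 0)"], rule exI[of _ 1], rule exI[of _ 0])
      apply (intro conjI ballI)
         apply (rule line_C1)
        apply (subst line_vdv)
      using Om_pos apply (simp add: Qf_g0)
       apply (simp add: zero_prod_def)
      apply simp
      done
  qed
  show "globally_hyperbolic g0 X0"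
    unfolding globally_hyperbolic_def
    using causal_strict diamond_compact by (metis less_irrefl)
qed




lemma cell_meas: "cell \<in> sets lebesgue"
proof -
  have "cell = ({x::pt. 0 \<le> fst x} \<inter> {x. 0 \<le> snd x}) \<inter> ({x. fst x < 1} \<inter> {x. snd x < 1})"
    by (auto simp: cell_def)
  also have "\<dots> \<in> sets borel"
    by (intro sets.Int borel_closed borel_open closed_Int open_Int closed_Collect_le open_Collect_less
        continuous_intros)
  finally have "cell \<in> sets lborel" by simp
  then show ?thesis by (rule sets_completionI_sets)
qed

theorem theorem1p2:
  fixes \<epsilon> :: real
  assumes "0 < \<epsilon>" and "\<epsilon> < 1"
  shows "\<exists>g. torus_lorentz_metric g \<and> class_A g \<and> \<not> flat g \<and>
           {p \<in> cell. timelike_pole g p} \<in> sets lebesgue \<and>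
           ennreal (1 - \<epsilon>) * vol g cell \<le> vol g {p \<in> cell. timelike_pole g p} \<and>
           vol g {p \<in> cell. timelike_pole g p} \<le> vol g cell"
proof (intro exI[of _ g0] conjI)
  have eq: "{p \<in> cell. timelike_pole g0 p} = cell" using all_poles by auto
  show "torus_lorentz_metric g0" by (rule g0_lorentz)
  show "class_A g0" by (rule class_A_g0)
  show "\<not> flat g0" by (rule not_flat)
  show "{p \<in> cell. timelike_pole g0 p} \<in> sets lebesgue" unfolding eq by (rule cell_meas)
  have "ennreal (1 - \<epsilon>) \<le> 1" using assms by (simp add: ennreal_le_1)
  then have "ennreal (1 - \<epsilon>) * vol g0 cell \<le> 1 * vol g0 cell" by (rule mult_right_mono) simp
  then show "ennreal (1 - \<epsilon>) * vol g0 cell \<le> vol g0 {p \<in> cell. timelike_pole g0 p}" unfolding eq by simp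
  show "vol g0 {p \<in> cell. timelike_pole g0 p} \<le> vol g0 cell" unfolding eq by simp
qed


end
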